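(* For $i=1,\dots,n$ let $X_i=\{0,\dots,m_i-1\}$ and let $P_i$ be an irreducible stochastic matrix on $X_i$ in detailed balance with a strictly positive probability measure $\sigma_i$, where $\sigma_i$ is uniform for every $i\ge2$. Let $p^0_1,\dots,p^0_n>0$ sum to $1$ and $P=\sum_{i=1}^np^0_i(I_1\otimes\cdots\otimes I_{i-1}\otimes P_i\otimes J_{i+1}\otimes\cdots\otimes J_n)$. For each $i$ let $U_i$ be real, $\Delta_i$ real diagonal and $D_i=\mathrm{diag}(\sigma_i(0),\dots,\sigma_i(m_i-1))$ with $P_iU_i=U_i\Delta_i$, $U_i^TD_iU_i=I$, the column of $U_i$ indexed by $0$ equal to the all-ones vector and $(\Delta_i)_{00}=1$. Set $$U=U_1\otimes A_2\otimes\cdots\otimes A_n+\sum_{k=2}^nI_1^{\sigma_1\text{-norm}}\otimes\cdots\otimes I_{k-1}^{\sigma_{k-1}\text{-norm}}\otimes(U_k-A_k)\otimes A_{k+1}\otimes\cdots\otimes A_n,$$ $$D=\bigotimes_{i=1}^nD_i,\qquad \Delta=\sum_{i=1}^np^0_i(I_1\otimes\cdots\otimes I_{i-1}\otimes\Delta_i\otimes J^{\mathrm{diag}}_{i+1}\otimes\cdots\otimes J^{\mathrm{diag}}_n).$$ Then $PU=U\Delta$ and $U^TDU=I$.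
   Context: $I_i$ is the $m_i\times m_i$ identity, $J_i$ the $m_i\times m_i$ matrix with all entries $1/m_i$, $I_i^{\sigma_i\text{-norm}}=\mathrm{diag}(\sigma_i(0)^{-1/2},\dots,\sigma_i(m_i-1)^{-1/2})$, $A_i$ the $m_i\times m_i$ matrix whose column $0$ consists of ones and all other entries are $0$, and $J^{\mathrm{diag}}_i=\mathrm{diag}(1,0,\dots,0)$. Kronecker products are indexed lexicographically: $(A\otimes B)_{(x,x'),(y,y')}=A_{x,y}B_{x',y'}$. *)

theory Defs
  imports Complex_Main "HOL-Library.FuncSet"
begin

text \<open>Factor matrices are
functions nat \<Rightarrow> nat \<Rightarrow> real, only entries with indices < m i matter.
The product space X_1 \<times> ... \<times> X_n is represented by the extensional function
space PiE {1..n} (\<lambda>i. {..<m i}); a matrix on it is a function on pairs of points.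
The Kronecker product of factors F_1,...,F_n is the matrix
(x,y) \<mapsto> prod_i F_i (x i) (y i), which is the lexicographic Kronecker product
up to the canonical identification of indices.\<close>

type_synonym fmat = "nat \<Rightarrow> nat \<Rightarrow> real"
type_synonym pmat = "(nat \<Rightarrow> nat) \<Rightarrow> (nat \<Rightarrow> nat) \<Rightarrow> real"

definition fmul :: "nat \<Rightarrow> fmat \<Rightarrow> fmat \<Rightarrow> fmat" where
  "fmul m A B = (\<lambda>a c. \<Sum>b<m. A a b * B b c)"

definition fid :: fmat where
  "fid = (\<lambda>a b. if a = b then 1 else 0)"

primrec fpow :: "nat \<Rightarrow> fmat \<Rightarrow> nat \<Rightarrow> fmat" where
  "fpow m A 0 = fid"
| "fpow m A (Suc k) = fmul m (fpow m A k) A"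

definition ftrans :: "fmat \<Rightarrow> fmat" where
  "ftrans A = (\<lambda>a b. A b a)"

definition fdiag :: "(nat \<Rightarrow> real) \<Rightarrow> fmat" where
  "fdiag d = (\<lambda>a b. if a = b then d a else 0)"

definition stochastic :: "nat \<Rightarrow> fmat \<Rightarrow> bool" where
  "stochastic m P \<longleftrightarrow> (\<forall>a<m. \<forall>b<m. P a b \<ge> 0) \<and> (\<forall>a<m. (\<Sum>b<m. P a b) = 1)"

definition irreducible_mat :: "nat \<Rightarrow> fmat \<Rightarrow> bool" where
  "irreducible_mat m P \<longleftrightarrow> (\<forall>a<m. \<forall>b<m. \<exists>k. fpow m P k a b > 0)"

definition detailed_balance :: "nat \<Rightarrow> fmat \<Rightarrow> (nat \<Rightarrow> real) \<Rightarrow> bool" where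
  "detailed_balance m P \<sigma> \<longleftrightarrow> (\<forall>a<m. \<forall>b<m. \<sigma> a * P a b = \<sigma> b * P b a)"

definition pos_prob :: "nat \<Rightarrow> (nat \<Rightarrow> real) \<Rightarrow> bool" where
  "pos_prob m \<sigma> \<longleftrightarrow> (\<forall>a<m. \<sigma> a > 0) \<and> (\<Sum>a<m. \<sigma> a) = 1"

definition feq :: "nat \<Rightarrow> fmat \<Rightarrow> fmat \<Rightarrow> bool" where
  "feq m A B \<longleftrightarrow> (\<forall>a<m. \<forall>b<m. A a b = B a b)"

definition Jmat :: "nat \<Rightarrow> fmat" where
  "Jmat m = (\<lambda>a b. 1 / real m)"

definition Amat :: fmat where
  "Amat = (\<lambda>a b. if b = 0 then 1 else 0)"

definition Jdiag :: fmat where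
  "Jdiag = (\<lambda>a b. if a = 0 \<and> b = 0 then 1 else 0)"

definition Inorm :: "(nat \<Rightarrow> real) \<Rightarrow> fmat" where
  "Inorm \<sigma> = (\<lambda>a b. if a = b then \<sigma> a powr (-1/2) else 0)"

definition pspace :: "nat \<Rightarrow> (nat \<Rightarrow> nat) \<Rightarrow> (nat \<Rightarrow> nat) set" where
  "pspace n m = PiE {1..n} (\<lambda>i. {..<m i})"

definition kron :: "nat \<Rightarrow> (nat \<Rightarrow> fmat) \<Rightarrow> pmat" where
  "kron n F = (\<lambda>x y. \<Prod>i\<in>{1..n}. F i (x i) (y i))"

definition pmul :: "nat \<Rightarrow> (nat \<Rightarrow> nat) \<Rightarrow> pmat \<Rightarrow> pmat \<Rightarrow> pmat" where
  "pmul n m A B = (\<lambda>x z. \<Sum>y\<in>pspace n m. A x y * B y z)"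

definition ptrans :: "pmat \<Rightarrow> pmat" where
  "ptrans A = (\<lambda>x y. A y x)"

definition pid :: pmat where
  "pid = (\<lambda>x y. if x = y then 1 else 0)"

definition peq :: "nat \<Rightarrow> (nat \<Rightarrow> nat) \<Rightarrow> pmat \<Rightarrow> pmat \<Rightarrow> bool" where
  "peq n m A B \<longleftrightarrow> (\<forall>x\<in>pspace n m. \<forall>y\<in>pspace n m. A x y = B x y)"

end

theory Submission
  imports Defs
begin

lemma pmul_kron:
  "pmul n m (kron n F) (kron n G) x z = kron n (\<lambda>j. fmul (m j) (F j) (G j)) x z"
proof -
  have "kron n (\<lambda>j. fmul (m j) (F j) (G j)) x z
      = (\<Prod>j\<in>{1..n}. \<Sum>b\<in>{..<m j}. F j (x j) b * G j b (z j))"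
    by (simp add: kron_def fmul_def)
  also have "\<dots> = (\<Sum>y\<in>pspace n m. \<Prod>j\<in>{1..n}. F j (x j) (y j) * G j (y j) (z j))"
    unfolding pspace_def by (rule prod_sum_PiE) auto
  also have "\<dots> = pmul n m (kron n F) (kron n G) x z"
    by (simp add: pmul_def kron_def prod.distrib)
  finally show ?thesis by simp
qed

lemma kron_cong:
  assumes "\<And>j. j \<in> {1..n} \<Longrightarrow> feq (m j) (F j) (G j)" "x \<in> pspace n m" "y \<in> pspace n m"
  shows "kron n F x y = kron n G x y"
  unfolding kron_def
proof (rule prod.cong[OF refl])
  fix j assume j: "j \<in> {1..n}"
  have "x j < m j" "y j < m j" using assms(2,3) j by (auto simp: pspace_def PiE_def Pi_def)
  then show "F j (x j) (y j) = G j (x j) (y j)" using assms(1)[OF j] by (simp add: feq_def)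
qed

lemma kron_zero:
  assumes "k \<in> {1..n}" "F k (x k) (y k) = 0"
  shows "kron n F x y = 0"
  unfolding kron_def using assms by (intro prod_zero) auto

lemma kron_diff:
  assumes "k \<in> {1..n}"
  shows "kron n (F(k := (\<lambda>a b. A a b - B a b))) x y = kron n (F(k := A)) x y - kron n (F(k := B)) x y"
proof -
  have f: "finite {1..n}" by simp
  have "\<And>H. kron n H x y = H k (x k) (y k) * (\<Prod>j\<in>{1..n}-{k}. H j (x j) (y j))"
    unfolding kron_def using prod.remove[OF f assms] by blast
  moreover have "\<And>C. (\<Prod>j\<in>{1..n}-{k}. (F(k:=C)) j (x j) (y j)) = (\<Prod>j\<in>{1..n}-{k}. F j (x j) (y j))"
    by (rule prod.cong) auto
  ultimately show ?thesis by (simp add: algebra_simps)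
qed

lemma if10_mult[simp]: "(if P then (1::real) else 0) * x = (if P then x else 0)"
  "x * (if P then (1::real) else 0) = (if P then x else 0)" by auto

lemma fmul_fid_left: "a < m \<Longrightarrow> fmul m fid X a c = X a c"
  by (simp add: fmul_def fid_def)
lemma fmul_fid_right: "c < m \<Longrightarrow> fmul m X fid a c = X a c"
  by (simp add: fmul_def fid_def)

lemma fmul_diff_right: "fmul m X (\<lambda>a b. Y a b - Z a b) a c = fmul m X Y a c - fmul m X Z a c"
  by (simp add: fmul_def algebra_simps sum_subtractf)
lemma fmul_diff_left: "fmul m (\<lambda>a b. Y a b - Z a b) X a c = fmul m Y X a c - fmul m Z X a c"
  by (simp add: fmul_def algebra_simps sum_subtractf)

lemma gram_eq: "fmul m (fmul m (ftrans X) (fdiag s)) Y a c = (\<Sum>b<m. X b a * s b * Y b c)"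
proof -
  have "\<And>b. b < m \<Longrightarrow> fmul m (ftrans X) (fdiag s) a b = X b a * s b"
    by (simp add: fmul_def ftrans_def fdiag_def if_distrib cong: if_cong)
  then show ?thesis by (simp add: fmul_def)
qed

lemma kron_cong':
  assumes "\<And>j. j \<in> {1..n} \<Longrightarrow> F j = G j"
  shows "kron n F x y = kron n G x y"
  unfolding kron_def using assms by (intro prod.cong) auto

lemma pmul_sum_left:
  "pmul n m (\<lambda>x y. \<Sum>i\<in>I. f i x y) B x z = (\<Sum>i\<in>I. pmul n m (f i) B x z)"
  unfolding pmul_def by (simp add: sum_distrib_right) (rule sum.swap)

lemma pmul_sum_right:
  "pmul n m A (\<lambda>x y. \<Sum>i\<in>I. f i x y) x z = (\<Sum>i\<in>I. pmul n m A (f i) x z)"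
  unfolding pmul_def by (simp add: sum_distrib_left) (rule sum.swap)

lemma pmul_scale_left:
  "pmul n m (\<lambda>x y. c * A x y) B x z = c * pmul n m A B x z"
  unfolding pmul_def by (simp add: sum_distrib_left mult.assoc)

lemma pmul_scale_right:
  "pmul n m A (\<lambda>x y. c * B x y) x z = c * pmul n m A B x z"
  unfolding pmul_def by (simp add: sum_distrib_left algebra_simps)

lemma F1:
  assumes "0 < m" "\<And>a. a < m \<Longrightarrow> U a 0 = 1"
    "\<And>c. c < m \<Longrightarrow> c \<noteq> 0 \<Longrightarrow> (\<Sum>b<m. U b c) = 0" "c < m"
  shows "fmul m (Jmat m) (\<lambda>a b. U a b - Amat a b) a c = 0"
proof (cases "c = 0")
  case True
  then show ?thesis using assms(2) by (simp add: fmul_def Amat_def)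
next
  case False
  then have "fmul m (Jmat m) (\<lambda>a b. U a b - Amat a b) a c = (1 / real m) * (\<Sum>b<m. U b c)"
    by (simp add: fmul_def Amat_def Jmat_def sum_distrib_left)
  then show ?thesis using assms(3)[OF assms(4) False] by simp
qed

lemma F2:
  assumes "0 < m" "U a 0 = 1"
  shows "fmul m (\<lambda>a b. U a b - Amat a b) Jdiag a c = 0"
proof -
  have "fmul m (\<lambda>a b. U a b - Amat a b) Jdiag a c = (\<Sum>b<m. (if b = 0 then (if c = 0 then U a 0 - 1 else 0) else 0))"
    unfolding fmul_def by (intro sum.cong) (auto simp: Jdiag_def Amat_def)
  also have "\<dots> = 0" using assms by simp
  finally show ?thesis .
qed

lemma F3:
  assumes "stochastic m P" "a < m"
  shows "fmul m P Amat a c = Amat a c"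
  using assms by (simp add: fmul_def Amat_def stochastic_def)

lemma F4:
  assumes "0 < m" "c < m" "\<Delta> 0 0 = 1" "\<And>b. b < m \<Longrightarrow> b \<noteq> 0 \<Longrightarrow> \<Delta> 0 b = 0"
  shows "fmul m Amat \<Delta> a c = Amat a c"
proof -
  have "fmul m Amat \<Delta> a c = (\<Sum>b<m. if b = 0 then \<Delta> 0 c else 0)"
    unfolding fmul_def by (intro sum.cong) (auto simp: Amat_def)
  also have "\<dots> = \<Delta> 0 c" using assms(1) by simp
  finally show ?thesis using assms by (cases "c = 0") (auto simp: Amat_def)
qed

lemma F5:
  assumes "0 < m"
  shows "fmul m (Jmat m) Amat a c = Amat a c"
  using assms by (simp add: fmul_def Amat_def Jmat_def)

lemma F6:
  assumes "0 < m"
  shows "fmul m Amat Jdiag a c = Amat a c"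
proof -
  have "fmul m Amat Jdiag a c = (\<Sum>b<m. if b = 0 then Amat a c else 0)"
    unfolding fmul_def by (intro sum.cong) (auto simp: Amat_def Jdiag_def)
  then show ?thesis using assms by simp
qed

lemma G1:
  assumes "a < m" "c < m" "s a > 0"
  shows "(\<Sum>b<m. Inorm s b a * s b * Inorm s b c) = fid a c"
proof -
  have "(\<Sum>b<m. Inorm s b a * s b * Inorm s b c) = (\<Sum>b<m. if b = a then (if a = c then s a powr (-1/2) * s a * s a powr (-1/2) else 0) else 0)"
    by (intro sum.cong) (auto simp: Inorm_def)
  also have "\<dots> = (if a = c then s a powr (-1/2) * s a * s a powr (-1/2) else 0)"
    using assms by simp
  also have "s a powr (-1/2) * s a * s a powr (-1/2) = 1"
  proof -
    have "s a powr (-1/2) * s a powr (-1/2) = s a powr (-1/2 + -1/2)"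
      by (simp only: powr_add)
    also have "\<dots> = inverse (s a)" using assms by (simp add: powr_minus)
    finally show ?thesis using assms by (simp add: field_simps)
  qed
  finally show ?thesis by (simp add: fid_def)
qed

lemma G2:
  assumes "(\<Sum>b<m. s b) = 1"
  shows "(\<Sum>b<m. Amat b a * s b * Amat b c) = Jdiag a c"
proof -
  have "(\<Sum>b<m. Amat b a * s b * Amat b c) = (if a = 0 \<and> c = 0 then (\<Sum>b<m. s b) else 0)"
    by (cases "a = 0"; cases "c = 0") (simp_all add: Amat_def)
  then show ?thesis using assms by (simp add: Jdiag_def)
qed

lemma G4:
  assumes "c < m" "\<And>c. c < m \<Longrightarrow> (\<Sum>b<m. s b * U b c) = fid 0 c" "(\<Sum>b<m. s b) = 1"
  shows "(\<Sum>b<m. Amat b a * s b * (U b c - Amat b c)) = 0"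
proof -
  have "(\<Sum>b<m. Amat b a * s b * (U b c - Amat b c)) = (if a = 0 then (\<Sum>b<m. s b * U b c) - (if c = 0 then (\<Sum>b<m. s b) else 0) else 0)"
    by (auto simp: Amat_def algebra_simps sum_subtractf)
  then show ?thesis using assms by (simp add: fid_def)
qed

lemma G5:
  assumes "a < m" "\<And>c. c < m \<Longrightarrow> (\<Sum>b<m. s b * U b c) = fid 0 c" "(\<Sum>b<m. s b) = 1"
  shows "(\<Sum>b<m. (U b a - Amat b a) * s b * Amat b c) = 0"
proof -
  have "(\<Sum>b<m. (U b a - Amat b a) * s b * Amat b c) = (if c = 0 then (\<Sum>b<m. s b * U b a) - (if a = 0 then (\<Sum>b<m. s b) else 0) else 0)"
    by (auto simp: Amat_def algebra_simps sum_subtractf)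
  then show ?thesis using assms by (simp add: fid_def)
qed

lemma G3:
  assumes "a < m" "c < m" "\<And>a c. a < m \<Longrightarrow> c < m \<Longrightarrow> (\<Sum>b<m. U b a * s b * U b c) = fid a c"
    "\<And>c. c < m \<Longrightarrow> (\<Sum>b<m. s b * U b c) = fid 0 c" "(\<Sum>b<m. s b) = 1"
  shows "(\<Sum>b<m. (U b a - Amat b a) * s b * (U b c - Amat b c)) = fid a c - Jdiag a c"
proof -
  have "(\<Sum>b<m. (U b a - Amat b a) * s b * (U b c - Amat b c))
    = (\<Sum>b<m. U b a * s b * U b c) - (\<Sum>b<m. (U b a - Amat b a) * s b * Amat b c)
      - (\<Sum>b<m. Amat b a * s b * (U b c - Amat b c)) - (\<Sum>b<m. Amat b a * s b * Amat b c)"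
    by (simp add: sum_subtractf[symmetric] algebra_simps)
  also have "\<dots> = fid a c - Jdiag a c"
    using assms G4[where c=c and m=m and s=s and U=U and a=a] G5[where c=c and m=m and s=s and U=U and a=a] G2[where m=m and s=s and a=a and c=c] by simp
  finally show ?thesis .
qed

theorem corollary6p2:
  fixes n :: nat and m :: "nat \<Rightarrow> nat"
    and P U \<Delta> :: "nat \<Rightarrow> fmat" and \<sigma> :: "nat \<Rightarrow> nat \<Rightarrow> real" and p0 :: "nat \<Rightarrow> real"
  assumes n: "n \<ge> 1"
    and stoch: "\<And>i. i \<in> {1..n} \<Longrightarrow> stochastic (m i) (P i)"
    and irr: "\<And>i. i \<in> {1..n} \<Longrightarrow> irreducible_mat (m i) (P i)"
    and sigma: "\<And>i. i \<in> {1..n} \<Longrightarrow> pos_prob (m i) (\<sigma> i)"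
    and db: "\<And>i. i \<in> {1..n} \<Longrightarrow> detailed_balance (m i) (P i) (\<sigma> i)"
    and unif: "\<And>i a. i \<in> {2..n} \<Longrightarrow> a < m i \<Longrightarrow> \<sigma> i a = 1 / real (m i)"
    and p0pos: "\<And>i. i \<in> {1..n} \<Longrightarrow> p0 i > 0"
    and p0sum: "(\<Sum>i=1..n. p0 i) = 1"
    and Delta_diag: "\<And>i a b. i \<in> {1..n} \<Longrightarrow> a < m i \<Longrightarrow> b < m i \<Longrightarrow> a \<noteq> b \<Longrightarrow> \<Delta> i a b = 0"
    and eig: "\<And>i. i \<in> {1..n} \<Longrightarrow>
               feq (m i) (fmul (m i) (P i) (U i)) (fmul (m i) (U i) (\<Delta> i))"
    and orth: "\<And>i. i \<in> {1..n} \<Longrightarrow>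
               feq (m i) (fmul (m i) (fmul (m i) (ftrans (U i)) (fdiag (\<sigma> i))) (U i)) fid"
    and col0: "\<And>i a. i \<in> {1..n} \<Longrightarrow> a < m i \<Longrightarrow> U i a 0 = 1"
    and Delta00: "\<And>i. i \<in> {1..n} \<Longrightarrow> \<Delta> i 0 0 = 1"
  defines "PP \<equiv> (\<lambda>x y. \<Sum>i=1..n. p0 i *
              kron n (\<lambda>j. if j < i then fid else if j = i then P i else Jmat (m j)) x y)"
    and "UU \<equiv> (\<lambda>x y. kron n (\<lambda>j. if j = 1 then U 1 else Amat) x y
              + (\<Sum>k=2..n. kron n (\<lambda>j. if j < k then Inorm (\<sigma> j)
                                       else if j = k then (\<lambda>a b. U k a b - Amat a b)
                                       else Amat) x y))"
    and "DD \<equiv> kron n (\<lambda>j. fdiag (\<sigma> j))"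
    and "DL \<equiv> (\<lambda>x y. \<Sum>i=1..n. p0 i *
              kron n (\<lambda>j. if j < i then fid else if j = i then \<Delta> i else Jdiag) x y)"
  shows "peq n m (pmul n m PP UU) (pmul n m UU DL)
       \<and> peq n m (pmul n m (pmul n m (ptrans UU) DD) UU) pid"
proof -
  define Tf where "Tf = (\<lambda>k j. if j < k then Inorm (\<sigma> j) else if j = k then (if k = 1 then U 1 else (\<lambda>a b. U k a b - Amat a b)) else Amat)"
  define Kf where "Kf = (\<lambda>i j. if j < i then fid else if j = i then P i else Jmat (m j))"
  define Df where "Df = (\<lambda>i (j::nat). if j < i then fid else if j = i then \<Delta> i else Jdiag)"
  have mpos: "\<And>i. i \<in> {1..n} \<Longrightarrow> 0 < m i"
  proof -
    fix i assume "i \<in> {1..n}"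
    then have "(\<Sum>a<m i. \<sigma> i a) = 1" using sigma by (simp add: pos_prob_def)
    then show "0 < m i" by (cases "m i") auto
  qed
  have sigpos: "\<And>i a. i \<in> {1..n} \<Longrightarrow> a < m i \<Longrightarrow> \<sigma> i a > 0" using sigma by (simp add: pos_prob_def)
  have sigsum: "\<And>i. i \<in> {1..n} \<Longrightarrow> (\<Sum>a<m i. \<sigma> i a) = 1" using sigma by (simp add: pos_prob_def)
  have orthp: "\<And>i a c. i \<in> {1..n} \<Longrightarrow> a < m i \<Longrightarrow> c < m i \<Longrightarrow> (\<Sum>b<m i. U i b a * \<sigma> i b * U i b c) = fid a c"
    using orth by (simp add: feq_def gram_eq)
  have colsum: "\<And>i c. i \<in> {1..n} \<Longrightarrow> c < m i \<Longrightarrow> (\<Sum>b<m i. \<sigma> i b * U i b c) = fid 0 c"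
  proof -
    fix i c assume i: "i \<in> {1..n}" and c: "c < m i"
    have "(\<Sum>b<m i. \<sigma> i b * U i b c) = (\<Sum>b<m i. U i b 0 * \<sigma> i b * U i b c)"
      using col0[OF i] by (intro sum.cong) auto
    also have "\<dots> = fid 0 c" using orthp[OF i mpos[OF i] c] .
    finally show "(\<Sum>b<m i. \<sigma> i b * U i b c) = fid 0 c" .
  qed
  have sumU: "\<And>i c. i \<in> {2..n} \<Longrightarrow> c < m i \<Longrightarrow> c \<noteq> 0 \<Longrightarrow> (\<Sum>b<m i. U i b c) = 0"
  proof -
    fix i c assume i: "i \<in> {2..n}" and c: "c < m i" "c \<noteq> 0"
    have i1: "i \<in> {1..n}" using i by auto
    have "(\<Sum>b<m i. \<sigma> i b * U i b c) = (1 / real (m i)) * (\<Sum>b<m i. U i b c)"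
      using unif[OF i] by (simp add: sum_distrib_left)
    moreover have "(\<Sum>b<m i. \<sigma> i b * U i b c) = 0" using colsum[OF i1 c(1)] c(2) by (simp add: fid_def)
    ultimately show "(\<Sum>b<m i. U i b c) = 0" using mpos[OF i1] by simp
  qed
  have UUe: "UU = (\<lambda>x y. \<Sum>k=1..n. kron n (Tf k) x y)"
  proof (intro ext)
    fix x y
    have "(\<Sum>k=1..n. kron n (Tf k) x y) = kron n (Tf 1) x y + (\<Sum>k=2..n. kron n (Tf k) x y)"
      using sum.atLeast_Suc_atMost[OF n] by (simp add: numeral_2_eq_2)
    moreover have "kron n (Tf 1) x y = kron n (\<lambda>j. if j = 1 then U 1 else Amat) x y"
      by (rule kron_cong') (auto simp: Tf_def)
    moreover have "(\<Sum>k=2..n. kron n (Tf k) x y) = (\<Sum>k=2..n. kron n (\<lambda>j. if j < k then Inorm (\<sigma> j) else if j = k then (\<lambda>a b. U k a b - Amat a b) else Amat) x y)"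
      by (intro sum.cong refl) (simp add: Tf_def)
    ultimately show "UU x y = (\<Sum>k=1..n. kron n (Tf k) x y)" unfolding UU_def by simp
  qed
  have pdom: "\<And>x j. x \<in> pspace n m \<Longrightarrow> j \<in> {1..n} \<Longrightarrow> x j < m j"
    by (auto simp: pspace_def PiE_def Pi_def)
  have pair: "\<And>i k x z. i \<in> {1..n} \<Longrightarrow> k \<in> {1..n} \<Longrightarrow> x \<in> pspace n m \<Longrightarrow> z \<in> pspace n m \<Longrightarrow>
     kron n (\<lambda>j. fmul (m j) (Kf i j) (Tf k j)) x z = kron n (\<lambda>j. fmul (m j) (Tf k j) (Df i j)) x z"
  proof -
    fix i k x z assume i: "i \<in> {1..n}" and k: "k \<in> {1..n}" and x: "x \<in> pspace n m" and z: "z \<in> pspace n m"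
    show "kron n (\<lambda>j. fmul (m j) (Kf i j) (Tf k j)) x z = kron n (\<lambda>j. fmul (m j) (Tf k j) (Df i j)) x z"
    proof (cases "i < k")
      case True
      then have k2: "k \<in> {2..n}" "k \<noteq> 1" using i k by auto
      have "kron n (\<lambda>j. fmul (m j) (Kf i j) (Tf k j)) x z = 0"
      proof (rule kron_zero[OF k])
        show "fmul (m k) (Kf i k) (Tf k k) (x k) (z k) = 0"
          using True k2 F1[where m="m k" and U="U k" and c="z k" and a="x k", OF mpos[OF k] col0[OF k] sumU[OF k2(1)] pdom[OF z k]]
          by (simp add: Kf_def Tf_def)
      qed
      moreover have "kron n (\<lambda>j. fmul (m j) (Tf k j) (Df i j)) x z = 0"
      proof (rule kron_zero[OF k])
        show "fmul (m k) (Tf k k) (Df i k) (x k) (z k) = 0"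
          using True k2 F2[where m="m k" and U="U k" and a="x k" and c="z k", OF mpos[OF k] col0[OF k pdom[OF x k]]]
          by (simp add: Df_def Tf_def)
      qed
      ultimately show ?thesis by simp
    next
      case False
      show ?thesis
      proof (rule kron_cong[OF _ x z])
        fix j assume j: "j \<in> {1..n}"
        show "feq (m j) (fmul (m j) (Kf i j) (Tf k j)) (fmul (m j) (Tf k j) (Df i j))"
          unfolding feq_def
        proof (intro allI impI)
          fix a c assume a: "a < m j" and c: "c < m j"
          have D0: "\<And>b. b < m j \<Longrightarrow> b \<noteq> 0 \<Longrightarrow> \<Delta> j 0 b = 0"
            using Delta_diag[OF j mpos[OF j]] by auto
          note F4' = F4[where m="m j" and \<Delta>="\<Delta> j" and c=c and a=a, OF mpos[OF j] c Delta00[OF j] D0]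
          note F3' = F3[where m="m j" and P="P j" and a=a and c=c, OF stoch[OF j] a]
          consider "j < k" | "j = k" "k = i" | "j = k" "k < i" | "k < j" "j < i" | "k < j" "j = i" | "k < j" "i < j"
            using False by linarith
          then show "fmul (m j) (Kf i j) (Tf k j) a c = fmul (m j) (Tf k j) (Df i j) a c"
          proof cases
            case 1
            then show ?thesis using False
              by (simp add: Kf_def Tf_def Df_def fmul_fid_left[OF a] fmul_fid_right[OF c])
          next
            case 2
            show ?thesis
            proof (cases "k = 1")
              case True
              then show ?thesis using 2 eig[OF j] a c by (simp add: Kf_def Tf_def Df_def feq_def)
            next
              case False
              then show ?thesis using 2 eig[OF j] a c F3' F4'
                by (simp add: Kf_def Tf_def Df_def feq_def fmul_diff_left fmul_diff_right)
            qed
          next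
            case 3
            then show ?thesis using a c
              by (simp add: Kf_def Tf_def Df_def fmul_fid_left fmul_fid_right)
          next
            case 4
            then show ?thesis
              by (simp add: Kf_def Tf_def Df_def fmul_fid_left[OF a] fmul_fid_right[OF c])
          next
            case 5
            then show ?thesis using F3' F4' by (simp add: Kf_def Tf_def Df_def)
          next
            case 6
            then show ?thesis using F5[OF mpos[OF j]] F6[OF mpos[OF j]] by (simp add: Kf_def Tf_def Df_def)
          qed
        qed
      qed
    qed
  qed
  have PPe: "PP = (\<lambda>x y. \<Sum>i=1..n. p0 i * kron n (Kf i) x y)" unfolding PP_def Kf_def by simp
  have DLe: "DL = (\<lambda>x y. \<Sum>i=1..n. p0 i * kron n (Df i) x y)" unfolding DL_def Df_def by simp
  have part1: "peq n m (pmul n m PP UU) (pmul n m UU DL)"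
    unfolding peq_def
  proof (intro ballI)
    fix x z assume x: "x \<in> pspace n m" and z: "z \<in> pspace n m"
    have "pmul n m PP UU x z = (\<Sum>i=1..n. \<Sum>k=1..n. p0 i * kron n (\<lambda>j. fmul (m j) (Kf i j) (Tf k j)) x z)"
      unfolding PPe UUe by (simp add: pmul_sum_left pmul_sum_right pmul_scale_left pmul_kron sum_distrib_left)
    also have "\<dots> = (\<Sum>i=1..n. \<Sum>k=1..n. p0 i * kron n (\<lambda>j. fmul (m j) (Tf k j) (Df i j)) x z)"
      using pair x z by (intro sum.cong refl) auto
    also have "\<dots> = (\<Sum>k=1..n. \<Sum>i=1..n. p0 i * kron n (\<lambda>j. fmul (m j) (Tf k j) (Df i j)) x z)"
      by (rule sum.swap)
    also have "\<dots> = pmul n m UU DL x z"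
      unfolding DLe UUe by (simp add: pmul_sum_left pmul_sum_right pmul_scale_right pmul_kron sum_distrib_left)
    finally show "pmul n m PP UU x z = pmul n m UU DL x z" .
  qed
  define G where "G = (\<lambda>k l. kron n (\<lambda>j. fmul (m j) (fmul (m j) (ftrans (Tf k j)) (fdiag (\<sigma> j))) (Tf l j)))"
  define E where "E = (\<lambda>N. kron n (\<lambda>j. if j \<le> N then fid else Jdiag))"
  have ptU: "ptrans UU = (\<lambda>x y. \<Sum>k=1..n. kron n (\<lambda>j. ftrans (Tf k j)) x y)"
    unfolding UUe by (auto simp: ptrans_def kron_def ftrans_def intro!: ext)
  have step1: "pmul n m (ptrans UU) DD = (\<lambda>x y. \<Sum>k=1..n. kron n (\<lambda>j. fmul (m j) (ftrans (Tf k j)) (fdiag (\<sigma> j))) x y)"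
    unfolding ptU DD_def by (intro ext) (simp add: pmul_sum_left pmul_kron)
  have step2: "\<And>x z. pmul n m (pmul n m (ptrans UU) DD) UU x z = (\<Sum>k=1..n. \<Sum>l=1..n. G k l x z)"
    unfolding step1 unfolding UUe G_def by (simp add: pmul_sum_left pmul_sum_right pmul_kron)
  have offd: "\<And>k l x z. k \<in> {1..n} \<Longrightarrow> l \<in> {1..n} \<Longrightarrow> k \<noteq> l \<Longrightarrow> x \<in> pspace n m \<Longrightarrow> z \<in> pspace n m \<Longrightarrow> G k l x z = 0"
  proof -
    fix k l x z assume k: "k \<in> {1..n}" and l: "l \<in> {1..n}" and kl: "k \<noteq> l" and x: "x \<in> pspace n m" and z: "z \<in> pspace n m"
    show "G k l x z = 0"
    proof (cases "k < l")
      case True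
      show ?thesis unfolding G_def
      proof (rule kron_zero[OF l])
        have "l \<noteq> 1" using True k by auto
        then show "fmul (m l) (fmul (m l) (ftrans (Tf k l)) (fdiag (\<sigma> l))) (Tf l l) (x l) (z l) = 0"
          using True G4[where m="m l" and s="\<sigma> l" and U="U l" and c="z l" and a="x l", OF pdom[OF z l] colsum[OF l] sigsum[OF l]]
          by (simp add: gram_eq Tf_def)
      qed
    next
      case False
      then have lk: "l < k" using kl by auto
      show ?thesis unfolding G_def
      proof (rule kron_zero[OF k])
        have "k \<noteq> 1" using lk l by auto
        then show "fmul (m k) (fmul (m k) (ftrans (Tf k k)) (fdiag (\<sigma> k))) (Tf l k) (x k) (z k) = 0"
          using lk G5[where m="m k" and s="\<sigma> k" and U="U k" and c="z k" and a="x k", OF pdom[OF x k] colsum[OF k] sigsum[OF k]]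
          by (simp add: gram_eq Tf_def)
      qed
    qed
  qed
  have diag: "\<And>k x z. k \<in> {1..n} \<Longrightarrow> x \<in> pspace n m \<Longrightarrow> z \<in> pspace n m \<Longrightarrow>
      G k k x z = (if k = 1 then E 1 x z else E k x z - E (k - 1) x z)"
  proof -
    fix k x z assume k: "k \<in> {1..n}" and x: "x \<in> pspace n m" and z: "z \<in> pspace n m"
    define H where "H = (\<lambda>j. if j < k then fid else if j = k then (if k = 1 then fid else (\<lambda>a b. fid a b - Jdiag a b)) else Jdiag)"
    have GH: "G k k x z = kron n H x z"
      unfolding G_def
    proof (rule kron_cong[OF _ x z])
      fix j assume j: "j \<in> {1..n}"
      show "feq (m j) (fmul (m j) (fmul (m j) (ftrans (Tf k j)) (fdiag (\<sigma> j))) (Tf k j)) (H j)"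
        unfolding feq_def
      proof (intro allI impI)
        fix a c assume a: "a < m j" and c: "c < m j"
        consider "j < k" | "j = k" "k = 1" | "j = k" "k \<noteq> 1" | "k < j" by linarith
        then show "fmul (m j) (fmul (m j) (ftrans (Tf k j)) (fdiag (\<sigma> j))) (Tf k j) a c = H j a c"
        proof cases
          case 1
          then show ?thesis using G1[where m="m j" and s="\<sigma> j", OF a c sigpos[OF j a]]
            by (simp add: gram_eq Tf_def H_def)
        next
          case 2
          then show ?thesis using orthp[OF j a c] by (simp add: gram_eq Tf_def H_def)
        next
          case 3
          then show ?thesis using G3[where m="m j" and s="\<sigma> j" and U="U j", OF a c orthp[OF j] colsum[OF j] sigsum[OF j]]
            by (simp add: gram_eq Tf_def H_def)
        next
          case 4
          then show ?thesis using G2[where m="m j" and s="\<sigma> j", OF sigsum[OF j]]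
            by (simp add: gram_eq Tf_def H_def)
        qed
      qed
    qed
    show "G k k x z = (if k = 1 then E 1 x z else E k x z - E (k - 1) x z)"
    proof (cases "k = 1")
      case True
      have "kron n H x z = E 1 x z" unfolding E_def
        by (rule kron_cong') (auto simp: H_def True)
      then show ?thesis using GH True by simp
    next
      case False
      define F where "F = (\<lambda>j::nat. if j < k then fid else Jdiag)"
      have "kron n H x z = kron n (F(k := (\<lambda>a b. fid a b - Jdiag a b))) x z"
        using False by (intro kron_cong') (auto simp: H_def F_def)
      also have "\<dots> = kron n (F(k := fid)) x z - kron n (F(k := Jdiag)) x z"
        by (rule kron_diff[OF k])
      also have "kron n (F(k := fid)) x z = E k x z" unfolding E_def
        by (rule kron_cong') (auto simp: F_def)
      also have "kron n (F(k := Jdiag)) x z = E (k - 1) x z" unfolding E_def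
        by (rule kron_cong') (auto simp: F_def)
      finally show ?thesis using GH False by simp
    qed
  qed
  have part2: "peq n m (pmul n m (pmul n m (ptrans UU) DD) UU) pid"
    unfolding peq_def
  proof (intro ballI)
    fix x z assume x: "x \<in> pspace n m" and z: "z \<in> pspace n m"
    have inner: "\<And>k. k \<in> {1..n} \<Longrightarrow> (\<Sum>l=1..n. G k l x z) = G k k x z"
    proof -
      fix k assume k: "k \<in> {1..n}"
      have "(\<Sum>l=1..n. G k l x z) = G k k x z + (\<Sum>l\<in>{1..n}-{k}. G k l x z)"
        using k by (intro sum.remove) auto
      also have "(\<Sum>l\<in>{1..n}-{k}. G k l x z) = 0"
        using offd k x z by (intro sum.neutral) auto
      finally show "(\<Sum>l=1..n. G k l x z) = G k k x z" by simp
    qed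
    have tele: "\<And>N. 1 \<le> N \<Longrightarrow> N \<le> n \<Longrightarrow> (\<Sum>k=1..N. G k k x z) = E N x z"
    proof -
      fix N :: nat assume "1 \<le> N" "N \<le> n"
      then show "(\<Sum>k=1..N. G k k x z) = E N x z"
      proof (induction N)
        case 0
        then show ?case by simp
      next
        case (Suc N)
        show ?case
        proof (cases "N = 0")
          case True
          then show ?thesis using diag[of 1 x z] x z Suc.prems by simp
        next
          case False
          have "(\<Sum>k=1..Suc N. G k k x z) = (\<Sum>k=1..N. G k k x z) + G (Suc N) (Suc N) x z"
            by simp
          also have "(\<Sum>k=1..N. G k k x z) = E N x z" using Suc False by simp
          also have "G (Suc N) (Suc N) x z = E (Suc N) x z - E N x z"
            using diag[of "Suc N" x z] x z Suc.prems False by simp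
          finally show ?thesis by simp
        qed
      qed
    qed
    have "E n x z = pid x z"
    proof (cases "x = z")
      case True
      then show ?thesis unfolding E_def kron_def pid_def by (simp add: fid_def)
    next
      case False
      then obtain j where j: "x j \<noteq> z j" by auto
      have "j \<in> {1..n}"
      proof (rule ccontr)
        assume "j \<notin> {1..n}"
        then have "x j = undefined" "z j = undefined" using x z by (auto simp: pspace_def PiE_def extensional_def)
        then show False using j by simp
      qed
      then have "E n x z = 0" unfolding E_def using j by (intro kron_zero[of j]) (auto simp: fid_def)
      then show ?thesis using False by (simp add: pid_def)
    qed
    then show "pmul n m (pmul n m (ptrans UU) DD) UU x z = pid x z"
      using step2 inner tele[of n] n by simp
  qed
  show ?thesis using part1 part2 by simp
qed

end
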